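(* In the D-RR setting under the nonconvex assumptions, let $\alpha_t=\alpha$ for all $t$ with $$0<\alpha\le\min\Big\{\frac{1-\rho_w^2}{4\sqrt3\,L(m+2)},\ \frac{(1-\rho_w^2)^{3/2}}{16\sqrt6\,L}\Big\},$$ and define $Q_t:=f(\bar x_t^0)-\bar f+\frac{16\alpha L^2}{n(1-\rho_w^2)^2}\|\mathbf x_t^0-\mathbf 1(\bar x_t^0)^\intercal\|^2$. Then for every epoch $t$ (and every realization of the permutations), $$Q_{t+1}\le\Big[1+\frac{12m^2\alpha^3L^2A(4+m)}{1-\rho_w^2}+\frac{384A\alpha^3L^2m}{(1-\rho_w^2)^3}\Big]Q_t-\frac{m\alpha}{4}\|\nabla f(\bar x_t^0)\|^2+\frac{6m\alpha^3L^2B^2[m(m+4)+32]}{(1-\rho_w^2)^3}.$$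
   Context: D-RR setting. Let $n,m,p\ge1$ be integers and $[k]=\{1,\dots,k\}$. For $i\in[n]$, $\ell\in[m]$ let $f_{i,\ell}:\mathbb{R}^p\to\mathbb{R}$ be differentiable; $f_i:=\frac1m\sum_{\ell=1}^m f_{i,\ell}$, $f:=\frac1n\sum_{i=1}^n f_i$. Let $W=(w_{ij})\in\mathbb{R}^{n\times n}$ be nonnegative, symmetric, with $W\mathbf 1=\mathbf 1$, compliant with an undirected connected graph on $[n]$ (for $i\ne j$, $w_{ij}>0$ iff $\{i,j\}$ is an edge); $\rho_w$ is the spectral norm of $W-\frac1n\mathbf 1\mathbf 1^\intercal$ (so $\rho_w<1$). The D-RR algorithm: given initial points $x_{i,0}\in\mathbb{R}^p$ and stepsizes $\alpha_t>0$, at each epoch $t=0,1,\dots$ each agent $i$ draws a permutation $(\pi^i_0,\dots,\pi^i_{m-1})$ of $[m]$ uniformly at random, independently across agents and epochs; sets $x^0_{i,t}=x_{i,t}$; for $\ell=0,\dots,m-1$ sets $x^{\ell+1}_{i,t}=\sum_{j=1}^n w_{ij}\big(x^\ell_{j,t}-\alpha_t\nabla f_{j,\pi^j_\ell}(x^\ell_{j,t})\big)$; sets $x_{i,t+1}=x^m_{i,t}$. Notation: $\mathbf{x}_t^\ell\in\mathbb{R}^{n\times p}$ has $i$-th row $(x^\ell_{i,t})^\intercal$; $\bar x_t^\ell=\frac1n\sum_i x^\ell_{i,t}$; $\mathbf 1(\bar x_t^\ell)^\intercal$ is the $n\times p$ matrix all of whose rows equal $(\bar x_t^\ell)^\intercal$;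 $\|\cdot\|$ is Euclidean/Frobenius norm. Nonconvex assumptions: each $f_{i,\ell}$ has $L$-Lipschitz gradient and satisfies $f_{i,\ell}\ge\bar f_{i,\ell}$ for some constant $\bar f_{i,\ell}\in\mathbb{R}$; $\bar f:=\inf_x f(x)$; $A:=2L$; $B^2:=2L\big(\bar f-\frac{1}{mn}\sum_{i,\ell}\bar f_{i,\ell}\big)$. *)

theory Defs
  imports "HOL-Analysis.Analysis"
begin

text \<open>Agents are indexed by a finite type 'n (n = CARD('n)); points of R^p live in a
Euclidean space 'v (p = DIM('v)); local samples are indexed by 0..m-1.
W is a real ^'n^'n matrix; a state (an n x p matrix) is a function 'n => 'v.\<close>

definition gossip_ok :: "real^'n^'n \<Rightarrow> bool" where
  "gossip_ok W \<longleftrightarrow>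
     (\<forall>i j. W$i$j \<ge> 0) \<and> (\<forall>i j. W$i$j = W$j$i) \<and> (\<forall>i. (\<Sum>j\<in>UNIV. W$i$j) = 1) \<and>
     (\<forall>i j. (\<lambda>a b. a \<noteq> b \<and> W$a$b > 0)\<^sup>*\<^sup>* i j)"

definition rho_w :: "real^'n^'n \<Rightarrow> real" where
  "rho_w W = onorm (\<lambda>v. (W - (\<chi> i j. 1 / real CARD('n))) *v v)"

definition drr_step :: "real^'n^'n \<Rightarrow> ('n \<Rightarrow> nat \<Rightarrow> 'v \<Rightarrow> 'v::real_normed_vector)
    \<Rightarrow> real \<Rightarrow> ('n \<Rightarrow> nat) \<Rightarrow> ('n \<Rightarrow> 'v) \<Rightarrow> ('n \<Rightarrow> 'v)" where
  "drr_step W g \<alpha> s x = (\<lambda>i. \<Sum>j\<in>UNIV. W$i$j *\<^sub>R (x j - \<alpha> *\<^sub>R g j (s j) (x j)))"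

text \<open>Inner iterates within an epoch: drr_inner ... perm l x = x^l, with perm j l = pi^j_l.\<close>
primrec drr_inner :: "real^'n^'n \<Rightarrow> ('n \<Rightarrow> nat \<Rightarrow> 'v \<Rightarrow> 'v::real_normed_vector)
    \<Rightarrow> real \<Rightarrow> ('n \<Rightarrow> nat \<Rightarrow> nat) \<Rightarrow> nat \<Rightarrow> ('n \<Rightarrow> 'v) \<Rightarrow> ('n \<Rightarrow> 'v)" where
  "drr_inner W g \<alpha> perm 0 x = x"
| "drr_inner W g \<alpha> perm (Suc l) x = drr_step W g \<alpha> (\<lambda>j. perm j l) (drr_inner W g \<alpha> perm l x)"

text \<open>Epoch iterates x_t = x_t^0 with stepsizes alpha t; pi t j l = pi^j_l at epoch t.\<close>
primrec drr :: "real^'n^'n \<Rightarrow> ('n \<Rightarrow> nat \<Rightarrow> 'v \<Rightarrow> 'v::real_normed_vector)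
    \<Rightarrow> (nat \<Rightarrow> real) \<Rightarrow> nat \<Rightarrow> (nat \<Rightarrow> 'n \<Rightarrow> nat \<Rightarrow> nat) \<Rightarrow> ('n \<Rightarrow> 'v) \<Rightarrow> nat \<Rightarrow> ('n \<Rightarrow> 'v)" where
  "drr W g \<alpha> m \<pi> x0 0 = x0"
| "drr W g \<alpha> m \<pi> x0 (Suc t) = drr_inner W g (\<alpha> t) (\<pi> t) m (drr W g \<alpha> m \<pi> x0 t)"

definition avg_pt :: "('n::finite \<Rightarrow> 'v::real_vector) \<Rightarrow> 'v" where
  "avg_pt x = (1 / real CARD('n)) *\<^sub>R (\<Sum>i\<in>UNIV. x i)"

text \<open>Squared Frobenius norm of x - 1 xbar^T.\<close>
definition consensus_err :: "('n::finite \<Rightarrow> 'v::real_normed_vector) \<Rightarrow> real" where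
  "consensus_err x = (\<Sum>i\<in>UNIV. (norm (x i - avg_pt x))\<^sup>2)"

definition global_f :: "nat \<Rightarrow> ('n::finite \<Rightarrow> nat \<Rightarrow> 'v \<Rightarrow> real) \<Rightarrow> 'v \<Rightarrow> real" where
  "global_f m f x = (1 / real CARD('n)) * (\<Sum>i\<in>UNIV. (1 / real m) * (\<Sum>l<m. f i l x))"

definition global_grad :: "nat \<Rightarrow> ('n::finite \<Rightarrow> nat \<Rightarrow> 'v \<Rightarrow> 'v::real_vector) \<Rightarrow> 'v \<Rightarrow> 'v" where
  "global_grad m g x = (1 / real CARD('n)) *\<^sub>R (\<Sum>i\<in>UNIV. (1 / real m) *\<^sub>R (\<Sum>l<m. g i l x))"

end

theory Submission
  imports Defs "HOL-Analysis.Analysis"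
begin


lemma sq_norm_euclid: "(norm (w::'v::euclidean_space))\<^sup>2 = (\<Sum>b\<in>Basis. (w \<bullet> b)\<^sup>2)"
  unfolding power2_norm_eq_inner by (simp add: euclidean_inner[of w w] power2_eq_square)

lemma sq_norm_vec: "(norm (v::real^'n))\<^sup>2 = (\<Sum>i\<in>UNIV. (v$i)\<^sup>2)"
  unfolding power2_norm_eq_inner by (simp add: inner_vec_def power2_eq_square)

lemma gossip_contract:
  fixes M :: "real^'n^'n" and y :: "'n \<Rightarrow> 'v::euclidean_space"
  shows "(\<Sum>i\<in>UNIV. (norm (\<Sum>j\<in>UNIV. M$i$j *\<^sub>R y j))\<^sup>2)
         \<le> (onorm (\<lambda>v. M *v v))\<^sup>2 * (\<Sum>j\<in>UNIV. (norm (y j))\<^sup>2)"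
proof -
  define r where "r = onorm (\<lambda>v. M *v v)"
  define \<eta> where "\<eta> b = (\<chi> j. y j \<bullet> b)" for b
  have bl: "bounded_linear (\<lambda>v. M *v v)" by simp
  have r0: "r \<ge> 0" unfolding r_def using onorm_pos_le[OF bl] .
  have comp: "(\<Sum>j\<in>UNIV. M$i$j *\<^sub>R y j) \<bullet> b = (M *v \<eta> b)$i" for i b
    by (simp add: inner_sum_left matrix_vector_mult_def \<eta>_def)
  have "(\<Sum>i\<in>UNIV. (norm (\<Sum>j\<in>UNIV. M$i$j *\<^sub>R y j))\<^sup>2)
      = (\<Sum>i\<in>UNIV. \<Sum>b\<in>Basis. ((M *v \<eta> b)$i)\<^sup>2)"
    by (simp add: sq_norm_euclid comp)
  also have "\<dots> = (\<Sum>b\<in>Basis. (norm (M *v \<eta> b))\<^sup>2)"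
    by (subst sum.swap) (simp add: sq_norm_vec)
  also have "\<dots> \<le> (\<Sum>b\<in>Basis. r\<^sup>2 * (norm (\<eta> b))\<^sup>2)"
  proof (rule sum_mono)
    fix b :: 'v
    have "norm (M *v \<eta> b) \<le> r * norm (\<eta> b)" unfolding r_def using onorm[OF bl] .
    hence "(norm (M *v \<eta> b))\<^sup>2 \<le> (r * norm (\<eta> b))\<^sup>2" by (simp add: power_mono)
    thus "(norm (M *v \<eta> b))\<^sup>2 \<le> r\<^sup>2 * (norm (\<eta> b))\<^sup>2" by (simp add: power_mult_distrib)
  qed
  also have "\<dots> = r\<^sup>2 * (\<Sum>b\<in>Basis. \<Sum>j\<in>UNIV. (y j \<bullet> b)\<^sup>2)"
    by (simp add: sum_distrib_left sq_norm_vec \<eta>_def)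
  also have "\<dots> = r\<^sup>2 * (\<Sum>j\<in>UNIV. (norm (y j))\<^sup>2)"
    by (subst sum.swap) (simp add: sq_norm_euclid)
  finally show ?thesis unfolding r_def .
qed



lemma descent:
  fixes h :: "'v::euclidean_space \<Rightarrow> real" and G :: "'v \<Rightarrow> 'v"
  assumes d: "\<And>x. (h has_derivative (\<lambda>d. G x \<bullet> d)) (at x)"
    and lip: "\<And>x y. norm (G x - G y) \<le> L * norm (x - y)"
  shows "h y \<le> h x + G x \<bullet> (y - x) + L / 2 * (norm (y - x))\<^sup>2"
proof -
  define dd where "dd = y - x"
  define \<psi> where "\<psi> s = h (x + s *\<^sub>R dd) - s * (G x \<bullet> dd) - L / 2 * s\<^sup>2 * (norm dd)\<^sup>2" for s
  have "\<psi> 1 \<le> \<psi> 0"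
  proof (rule DERIV_nonpos_imp_nonincreasing[of 0 1])
    fix s :: real assume s0: "0 \<le> s" and s1: "s \<le> 1"
    have c1: "((\<lambda>s. x + s *\<^sub>R dd) has_derivative (\<lambda>t. t *\<^sub>R dd)) (at s)"
      by (auto intro!: derivative_eq_intros)
    have c2: "((\<lambda>s. h (x + s *\<^sub>R dd)) has_derivative (\<lambda>t. G (x + s *\<^sub>R dd) \<bullet> (t *\<^sub>R dd))) (at s)"
      using diff_chain_at[OF c1 d[of "x + s *\<^sub>R dd"]] by (simp add: o_def)
    have c3: "((\<lambda>s. h (x + s *\<^sub>R dd)) has_real_derivative (G (x + s *\<^sub>R dd) \<bullet> dd)) (at s)"
      unfolding has_field_derivative_def using c2 by (simp add: mult.commute[of _ "G (x + s *\<^sub>R dd) \<bullet> dd"])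
    have c4: "(\<psi> has_real_derivative (G (x + s *\<^sub>R dd) \<bullet> dd - G x \<bullet> dd - L * s * (norm dd)\<^sup>2)) (at s)"
      unfolding \<psi>_def by (rule derivative_eq_intros c3 refl | simp)+
    have "G (x + s *\<^sub>R dd) \<bullet> dd - G x \<bullet> dd = (G (x + s *\<^sub>R dd) - G x) \<bullet> dd"
      by (simp add: inner_diff_left)
    also have "\<dots> \<le> norm (G (x + s *\<^sub>R dd) - G x) * norm dd" by (rule norm_cauchy_schwarz)
    also have "\<dots> \<le> L * norm (s *\<^sub>R dd) * norm dd"
      using lip[of "x + s *\<^sub>R dd" x] by (simp add: mult_right_mono)
    also have "\<dots> = L * s * (norm dd)\<^sup>2" using s0 by (simp add: power2_eq_square)
    finally show "\<exists>y. (\<psi> has_real_derivative y) (at s) \<and> y \<le> 0" using c4 by force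
  qed simp
  thus ?thesis unfolding \<psi>_def dd_def by simp
qed



lemma grad_sq_bound:
  fixes h :: "'v::euclidean_space \<Rightarrow> real" and G :: "'v \<Rightarrow> 'v"
  assumes d: "\<And>x. (h has_derivative (\<lambda>d. G x \<bullet> d)) (at x)"
    and lip: "\<And>x y. norm (G x - G y) \<le> L * norm (x - y)"
    and L: "L > 0" and low: "\<And>x. hb \<le> h x"
  shows "(norm (G x))\<^sup>2 \<le> 2 * L * (h x - hb)"
proof -
  define y where "y = x - (1/L) *\<^sub>R G x"
  have "h y \<le> h x + G x \<bullet> (y - x) + L / 2 * (norm (y - x))\<^sup>2" by (rule descent[OF d lip])
  also have "G x \<bullet> (y - x) = - (1/L) * (norm (G x))\<^sup>2"
    by (simp add: y_def power2_norm_eq_inner)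
  also have "L / 2 * (norm (y - x))\<^sup>2 = (1/(2*L)) * (norm (G x))\<^sup>2"
    using L by (simp add: y_def power2_eq_square field_simps)
  finally have "h y \<le> h x - (1/(2*L)) * (norm (G x))\<^sup>2" using L by (simp add: field_simps)
  with low[of y] have "(1/(2*L)) * (norm (G x))\<^sup>2 \<le> h x - hb" by linarith
  thus ?thesis using L by (simp add: field_simps)
qed

lemma global_f_deriv:
  fixes f :: "'n::finite \<Rightarrow> nat \<Rightarrow> 'v::euclidean_space \<Rightarrow> real" and g
  assumes grad: "\<And>i l x. l < m \<Longrightarrow> (f i l has_derivative (\<lambda>h. g i l x \<bullet> h)) (at x)"
  shows "(global_f m f has_derivative (\<lambda>d. global_grad m g x \<bullet> d)) (at x)"
proof -
  have "((\<lambda>x. (1 / real CARD('n)) * (\<Sum>i\<in>UNIV. (1 / real m) * (\<Sum>l<m. f i l x))) has_derivative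
        (\<lambda>d. (1 / real CARD('n)) * (\<Sum>i\<in>UNIV. (1 / real m) * (\<Sum>l<m. g i l x \<bullet> d)))) (at x)"
    by (intro has_derivative_mult_right has_derivative_sum) (auto intro: grad)
  moreover have "(\<lambda>d. (1 / real CARD('n)) * (\<Sum>i\<in>UNIV. (1 / real m) * (\<Sum>l<m. g i l x \<bullet> d)))
      = (\<lambda>d. global_grad m g x \<bullet> d)"
    by (simp add: global_grad_def inner_sum_left)
  ultimately show ?thesis unfolding global_f_def[abs_def] by simp
qed

lemma global_grad_lip:
  fixes g :: "'n::finite \<Rightarrow> nat \<Rightarrow> 'v::euclidean_space \<Rightarrow> 'v"
  assumes m: "m \<ge> 1" and lip: "\<And>i l x y. l < m \<Longrightarrow> norm (g i l x - g i l y) \<le> L * norm (x - y)"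
  shows "norm (global_grad m g x - global_grad m g y) \<le> L * norm (x - y)"
proof -
  have "global_grad m g x - global_grad m g y
      = (1 / real CARD('n)) *\<^sub>R (\<Sum>i\<in>UNIV. (1 / real m) *\<^sub>R (\<Sum>l<m. g i l x - g i l y))"
    by (simp add: global_grad_def scaleR_diff_right sum_subtractf)
  also have "norm \<dots> \<le> (1 / real CARD('n)) * (\<Sum>i::'n\<in>UNIV. (1 / real m) * (\<Sum>l<m. L * norm (x - y)))"
  proof -
    have "norm (\<Sum>i\<in>UNIV. (1 / real m) *\<^sub>R (\<Sum>l<m. g i l x - g i l y))
        \<le> (\<Sum>i::'n\<in>UNIV. norm ((1 / real m) *\<^sub>R (\<Sum>l<m. g i l x - g i l y)))" by (rule norm_sum)
    also have "\<dots> \<le> (\<Sum>i::'n\<in>UNIV. (1 / real m) * (\<Sum>l<m. L * norm (x - y)))"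
    proof (rule sum_mono)
      fix i :: 'n
      have "norm (\<Sum>l<m. g i l x - g i l y) \<le> (\<Sum>l<m. norm (g i l x - g i l y))" by (rule norm_sum)
      also have "\<dots> \<le> (\<Sum>l<m. L * norm (x - y))" by (rule sum_mono) (simp add: lip)
      finally show "norm ((1 / real m) *\<^sub>R (\<Sum>l<m. g i l x - g i l y)) \<le> (1 / real m) * (\<Sum>l<m. L * norm (x - y))"
        by (auto simp: divide_simps mult.commute)
    qed
    finally have X: "norm (\<Sum>i\<in>UNIV. (1 / real m) *\<^sub>R (\<Sum>l<m. g i l x - g i l y))
        \<le> (\<Sum>i::'n\<in>UNIV. (1 / real m) * (\<Sum>l<m. L * norm (x - y)))" .
    have "norm ((1 / real CARD('n)) *\<^sub>R (\<Sum>i\<in>UNIV. (1 / real m) *\<^sub>R (\<Sum>l<m. g i l x - g i l y)))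
       = (1 / real CARD('n)) * norm (\<Sum>i\<in>UNIV. (1 / real m) *\<^sub>R (\<Sum>l<m. g i l x - g i l y))" by simp
    also have "\<dots> \<le> (1 / real CARD('n)) * (\<Sum>i::'n\<in>UNIV. (1 / real m) * (\<Sum>l<m. L * norm (x - y)))"
      by (rule mult_left_mono[OF X]) simp
    finally show ?thesis .
  qed
  also have "\<dots> = L * norm (x - y)" using m by simp
  finally show ?thesis .
qed



lemma final_arith:
  fixes \<Delta> B2 e0 gn Fm em V P Ssum \<Lambda> lm q L \<alpha> n m c1 c \<kappa> \<beta> A :: real
  assumes D0: "\<Delta> \<ge> 0" and B0: "B2 \<ge> 0" and e00: "e0 \<ge> 0" and Lam0: "\<Lambda> \<ge> 0"
    and gn0: "gn \<ge> 0" and S0: "Ssum \<ge> 0"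
    and q0: "0 < q" and q1: "q \<le> 1" and L0: "L > 0" and a0: "\<alpha> > 0" and n1: "n \<ge> 1" and m1: "m \<ge> 1"
    and c1_def: "c1 = 4 * \<alpha>\<^sup>2 / q"
    and c_def: "c = 16 * \<alpha> * L\<^sup>2 / (n * q\<^sup>2)"
    and A_def: "A = 2 * L"
    and \<kappa>_def: "\<kappa> = 12 * m\<^sup>2 * \<alpha>^3 * L\<^sup>2 * A * (4 + m) / q + 384 * A * \<alpha>^3 * L\<^sup>2 * m / q^3"
    and \<beta>_def: "\<beta> = 6 * m * \<alpha>^3 * L\<^sup>2 * B2 * (m * (m + 4) + 32) / q^3"
    and a2a: "\<alpha>\<^sup>2 * L\<^sup>2 \<le> q\<^sup>2 / (48 * (m + 2)\<^sup>2)"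
    and a2b: "\<alpha>\<^sup>2 * L\<^sup>2 \<le> q^3 / 1536"
    and H1: "Fm \<le> \<Delta> - m * \<alpha> / 2 * gn + \<alpha> * L\<^sup>2 / (2 * n) * V"
    and H2: "em \<le> lm * e0 + c1 * P"
    and H3: "V \<le> \<Lambda> * e0 + (c1 * m + \<alpha>\<^sup>2 * m\<^sup>2) * P"
    and H4: "P = L\<^sup>2 * V + Ssum"
    and H5: "Ssum \<le> n * m * (A * \<Delta> + B2)"
    and H6: "lm = 1 - q / 2 * \<Lambda>"
  shows "Fm + c * em \<le> (1 + \<kappa>) * (\<Delta> + c * e0) - m * \<alpha> / 4 * gn + \<beta>"
proof -
  define w where "w = \<alpha>\<^sup>2 * L\<^sup>2"
  have w0: "w \<ge> 0" unfolding w_def by simp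
  define \<theta> where "\<theta> = L\<^sup>2 * (c1 * m + \<alpha>\<^sup>2 * m\<^sup>2)"
  have th_eq: "\<theta> = w * (m * (4 / q + m))"
    unfolding \<theta>_def w_def c1_def using q0 by (simp add: field_simps power2_eq_square)
  have mq0: "m * (4 / q + m) \<ge> 0" using m1 q0 by simp
  have "\<theta> \<le> q\<^sup>2 / (48 * (m + 2)\<^sup>2) * (m * (4 / q + m))"
    unfolding th_eq using mult_right_mono[OF a2a[folded w_def] mq0] .
  also have "\<dots> = (4 * q * m + q\<^sup>2 * m\<^sup>2) / (48 * (m + 2)\<^sup>2)"
  proof -
    have "q\<^sup>2 * (m * (4 / q + m)) = 4 * q * m + q\<^sup>2 * m\<^sup>2"
      using q0 by (simp add: field_simps power2_eq_square)
    thus ?thesis by (simp add: times_divide_eq_left[symmetric] mult.commute)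
  qed
  also have "\<dots> \<le> (4 * m + m\<^sup>2) / (48 * (m + 2)\<^sup>2)"
  proof (rule divide_right_mono)
    have "4 * q * m \<le> 4 * m" using q1 m1 by simp
    moreover have "q\<^sup>2 \<le> 1" using q0 q1 by (simp add: power_le_one)
    hence "q\<^sup>2 * m\<^sup>2 \<le> m\<^sup>2" using mult_right_mono[of "q\<^sup>2" 1 "m\<^sup>2"] by simp
    ultimately show "4 * q * m + q\<^sup>2 * m\<^sup>2 \<le> 4 * m + m\<^sup>2" by linarith
  qed simp
  also have "\<dots> \<le> 1 / 48"
  proof -
    have "4 * m + m\<^sup>2 \<le> (m + 2)\<^sup>2" by (simp add: power2_eq_square algebra_simps)
    moreover have "(m + 2)\<^sup>2 > 0" using m1 by simp
    ultimately show ?thesis by (simp add: divide_simps)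
  qed
  finally have th48: "\<theta> \<le> 1 / 48" .
  have th0: "\<theta> \<ge> 0" unfolding th_eq using w0 mq0 by simp
  have LV: "L\<^sup>2 * V \<le> L\<^sup>2 * \<Lambda> * e0 + \<theta> * P"
    using mult_left_mono[OF H3, of "L\<^sup>2"] unfolding \<theta>_def by (simp add: algebra_simps)
  define X where "X = L\<^sup>2 * \<Lambda> * e0 + Ssum"
  have X0: "X \<ge> 0" unfolding X_def using Lam0 e00 S0 by simp
  have PX: "P \<le> X + \<theta> * P" using H4 LV unfolding X_def by linarith
  have P47: "P \<le> 48 / 47 * X"
  proof (cases "P \<ge> 0")
    case True
    have "\<theta> * P \<le> 1/48 * P" using mult_right_mono[OF th48 True] .
    thus ?thesis using PX by linarith
  next
    case False thus ?thesis using X0 by linarith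
  qed
  define K where "K = \<alpha> * \<theta> / (2 * n) + c * c1"
  have c0: "c \<ge> 0" unfolding c_def using a0 n1 q0 by simp
  have c10: "c1 \<ge> 0" unfolding c1_def using q0 by simp
  have K0: "K \<ge> 0" unfolding K_def using a0 n1 th0 c0 c10 by simp
  have St4: "Fm + c * em \<le> \<Delta> - m * \<alpha> / 2 * gn + (\<alpha> * L\<^sup>2 * \<Lambda> / (2 * n) + c * lm) * e0 + K * P"
  proof -
    have "\<alpha> * L\<^sup>2 / (2 * n) * V = \<alpha> / (2 * n) * (L\<^sup>2 * V)" by simp
    also have "\<dots> \<le> \<alpha> / (2 * n) * (L\<^sup>2 * \<Lambda> * e0 + \<theta> * P)"
      by (rule mult_left_mono[OF LV]) (use a0 n1 in simp)
    finally have a: "\<alpha> * L\<^sup>2 / (2 * n) * V \<le> \<alpha> / (2 * n) * (L\<^sup>2 * \<Lambda> * e0 + \<theta> * P)" .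
    have b: "c * em \<le> c * (lm * e0 + c1 * P)" by (rule mult_left_mono[OF H2 c0])
    show ?thesis using H1 a b unfolding K_def by (simp add: algebra_simps)
  qed
  have St5: "K * P \<le> K * (48 / 47 * X)" by (rule mult_left_mono[OF P47 K0])
  have cc1: "c * c1 = 64 * \<alpha> * w / (n * q^3)"
    unfolding c_def c1_def w_def using q0 n1 by (simp add: field_simps power2_eq_square power3_eq_cube)
  have cc1b: "c * c1 \<le> \<alpha> / (24 * n)"
  proof -
    have "64 * \<alpha> * w / (n * q^3) \<le> 64 * \<alpha> * (q^3 / 1536) / (n * q^3)"
      by (rule divide_right_mono, rule mult_left_mono[OF a2b[folded w_def]]) (use a0 q0 n1 in simp_all)
    also have "\<dots> = \<alpha> / (24 * n)" using q0 n1 by (simp add: field_simps)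
    finally show ?thesis unfolding cc1 .
  qed
  have thb: "\<alpha> * \<theta> / (2 * n) \<le> \<alpha> / (96 * n)"
  proof -
    have "\<alpha> * \<theta> / (2 * n) \<le> \<alpha> * (1/48) / (2 * n)"
      by (rule divide_right_mono, rule mult_left_mono[OF th48]) (use a0 n1 in simp_all)
    thus ?thesis by simp
  qed
  have Kb: "K \<le> 5 * \<alpha> / (96 * n)" unfolding K_def using cc1b thb by (simp add: field_simps)
  have coef: "\<alpha> * L\<^sup>2 * \<Lambda> / (2 * n) + c * lm + K * (48 / 47) * L\<^sup>2 * \<Lambda> \<le> c"
  proof -
    have "K * (48 / 47) * L\<^sup>2 \<le> 5 * \<alpha> / (96 * n) * (48 / 47) * L\<^sup>2"
      using mult_right_mono[OF Kb, of "48/47 * L\<^sup>2"] by (simp add: mult.assoc)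
    hence k1: "K * (48 / 47) * L\<^sup>2 \<le> 5 / 94 * (\<alpha> * L\<^sup>2 / n)" by (simp add: field_simps)
    define Z where "Z = \<alpha> * L\<^sup>2 / n"
    have Z0: "Z \<ge> 0" unfolding Z_def using a0 n1 by simp
    have cq: "c * q / 2 = 8 * Z / q" unfolding Z_def c_def using q0 n1 by (simp add: field_simps power2_eq_square)
    have "Z * q \<le> Z" using Z0 q1 by (simp add: mult_left_le)
    hence "Z \<le> Z / q" using q0 by (simp add: le_divide_eq)
    hence "8 * Z \<le> 8 * Z / q" by simp
    moreover have "\<alpha> * L\<^sup>2 / (2 * n) = Z / 2" unfolding Z_def by simp
    ultimately have k2: "\<alpha> * L\<^sup>2 / (2 * n) + K * (48 / 47) * L\<^sup>2 \<le> c * q / 2"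
      using k1 Z0 cq unfolding Z_def[symmetric] by linarith
    have "(\<alpha> * L\<^sup>2 / (2 * n) + K * (48 / 47) * L\<^sup>2) * \<Lambda> \<le> c * q / 2 * \<Lambda>"
      by (rule mult_right_mono[OF k2 Lam0])
    thus ?thesis unfolding H6 by (simp add: algebra_simps)
  qed
  have Knm: "K * n * m = m * \<alpha> * \<theta> / 2 + 64 * m * \<alpha>^3 * L\<^sup>2 / q^3"
    unfolding K_def cc1 w_def using n1 by (simp add: field_simps power2_eq_square power3_eq_cube)
  have mth: "m * \<alpha> * \<theta> / 2 \<le> \<alpha>^3 * L\<^sup>2 * m\<^sup>2 * (4 + m) / (2 * q)"
  proof -
    have "m * \<alpha> * \<theta> / 2 = \<alpha>^3 * L\<^sup>2 * m\<^sup>2 * (4 / q + m) / 2"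
      unfolding th_eq w_def by (simp add: field_simps power2_eq_square power3_eq_cube)
    also have "\<dots> \<le> \<alpha>^3 * L\<^sup>2 * m\<^sup>2 * ((4 + m) / q) / 2"
    proof -
      have "m \<le> m / q" using q0 q1 m1 by (simp add: field_simps mult_left_le)
      hence "4 / q + m \<le> (4 + m) / q" by (simp add: add_divide_distrib)
      thus ?thesis using a0 by (intro divide_right_mono mult_left_mono) simp_all
    qed
    finally show ?thesis by simp
  qed
  have Snm: "K * Ssum \<le> K * n * m * (A * \<Delta> + B2)"
    using mult_left_mono[OF H5 K0] by (simp add: mult.assoc)
  define T where "T = \<alpha>^3 * L\<^sup>2"
  have T0: "T \<ge> 0" unfolding T_def using a0 by simp
  have KA: "48 / 47 * (K * n * m) \<le> \<kappa> / A"
  proof -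
    have "48 / 47 * (K * n * m) \<le> 48 / 47 * (T * m\<^sup>2 * (4 + m) / (2 * q) + 64 * m * T / q^3)"
      using mth unfolding Knm T_def by (simp only: mult.assoc) (intro mult_left_mono add_right_mono; simp)
    also have "\<dots> \<le> 12 * m\<^sup>2 * T * (4 + m) / q + 384 * T * m / q^3"
    proof -
      define U1 where "U1 = T * m\<^sup>2 * (4 + m) / q"
      define U2 where "U2 = m * T / q^3"
      have u: "U1 \<ge> 0" "U2 \<ge> 0" unfolding U1_def U2_def using T0 q0 m1 by simp_all
      have e1: "T * m\<^sup>2 * (4 + m) / (2 * q) = U1 / 2" unfolding U1_def by simp
      have e2: "64 * m * T / q^3 = 64 * U2" unfolding U2_def by simp
      have e3: "12 * m\<^sup>2 * T * (4 + m) / q = 12 * U1" unfolding U1_def by simp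
      have e4: "384 * T * m / q^3 = 384 * U2" unfolding U2_def by simp
      show ?thesis unfolding e1 e2 e3 e4 using u by (simp add: field_simps)
    qed
    also have "\<dots> = \<kappa> / A" unfolding \<kappa>_def A_def T_def using L0 by (simp add: field_simps)
    finally show ?thesis .
  qed
  have KB: "48 / 47 * (K * n * m) * B2 \<le> \<beta>"
  proof -
    have "48 / 47 * (K * n * m) \<le> 48 / 47 * (T * m\<^sup>2 * (4 + m) / (2 * q) + 64 * m * T / q^3)"
      using mth unfolding Knm T_def by (simp only: mult.assoc) (intro mult_left_mono add_right_mono; simp)
    also have "\<dots> \<le> 6 * m\<^sup>2 * T * (m + 4) / q^3 + 192 * m * T / q^3"
    proof -
      have "q^3 \<le> q^1" using power_decreasing[of 1 3 q] q0 q1 by simp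
      hence "1 / q \<le> 1 / q^3"
        using q0 by (simp add: divide_simps)
      hence "T * m\<^sup>2 * (4 + m) * (1 / q) \<le> T * m\<^sup>2 * (4 + m) * (1 / q^3)"
        by (rule mult_left_mono) (use T0 m1 in simp)
      hence i1: "T * m\<^sup>2 * (4 + m) / q \<le> T * m\<^sup>2 * (4 + m) / q^3" by simp
      define U1 where "U1 = T * m\<^sup>2 * (4 + m) / q"
      define U3 where "U3 = T * m\<^sup>2 * (4 + m) / q^3"
      define U2 where "U2 = m * T / q^3"
      have u: "U2 \<ge> 0" "U1 \<le> U3" "U1 \<ge> 0" unfolding U1_def U2_def U3_def using T0 q0 m1 i1 by simp_all
      have e1: "T * m\<^sup>2 * (4 + m) / (2 * q) = U1 / 2" unfolding U1_def by simp
      have e2: "64 * m * T / q^3 = 64 * U2" unfolding U2_def by simp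
      have e3: "6 * m\<^sup>2 * T * (m + 4) / q^3 = 6 * U3" unfolding U3_def by (simp add: algebra_simps)
      have e4: "192 * m * T / q^3 = 192 * U2" unfolding U2_def by simp
      show ?thesis unfolding e1 e2 e3 e4 using u by (simp add: field_simps)
    qed
    also have "\<dots> = 6 * m * T * (m * (m + 4) + 32) / q^3" by (simp add: add_divide_distrib algebra_simps power2_eq_square)
    finally have "48 / 47 * (K * n * m) \<le> 6 * m * T * (m * (m + 4) + 32) / q^3" .
    hence "48 / 47 * (K * n * m) * B2 \<le> 6 * m * T * (m * (m + 4) + 32) / q^3 * B2"
      by (rule mult_right_mono[OF _ B0])
    thus ?thesis unfolding \<beta>_def T_def by (simp add: field_simps)
  qed
  have KS: "K * (48 / 47 * Ssum) \<le> \<kappa> * \<Delta> + \<beta>"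
  proof -
    have "K * (48 / 47 * Ssum) \<le> 48 / 47 * (K * n * m) * (A * \<Delta> + B2)" using Snm by simp
    also have "\<dots> = 48 / 47 * (K * n * m) * A * \<Delta> + 48 / 47 * (K * n * m) * B2" by (simp add: algebra_simps)
    also have "48 / 47 * (K * n * m) * A * \<Delta> \<le> \<kappa> / A * A * \<Delta>"
      by (rule mult_right_mono[OF mult_right_mono[OF KA]]) (use L0 A_def D0 in simp_all)
    also have "\<kappa> / A * A * \<Delta> = \<kappa> * \<Delta>" using L0 A_def by simp
    finally show ?thesis using KB by linarith
  qed
  have ce0: "(\<alpha> * L\<^sup>2 * \<Lambda> / (2 * n) + c * lm + K * (48 / 47) * L\<^sup>2 * \<Lambda>) * e0 \<le> c * e0"
    by (rule mult_right_mono[OF coef e00])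
  have kap0: "\<kappa> \<ge> 0" unfolding \<kappa>_def A_def using a0 L0 q0 m1 by simp
  have "Fm + c * em \<le> \<Delta> - m * \<alpha> / 2 * gn + (\<alpha> * L\<^sup>2 * \<Lambda> / (2 * n) + c * lm + K * (48 / 47) * L\<^sup>2 * \<Lambda>) * e0 + K * (48/47 * Ssum)"
    using St4 St5 unfolding X_def by (simp add: algebra_simps)
  also have "\<dots> \<le> \<Delta> - m * \<alpha> / 2 * gn + c * e0 + (\<kappa> * \<Delta> + \<beta>)" using ce0 KS by linarith
  also have "\<dots> \<le> (1 + \<kappa>) * (\<Delta> + c * e0) - m * \<alpha> / 4 * gn + \<beta>"
  proof -
    have "0 \<le> \<kappa> * (c * e0)" using kap0 c0 e00 by simp
    moreover have "0 \<le> m * \<alpha> / 4 * gn" using m1 a0 gn0 by simp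
    ultimately show ?thesis by (simp add: algebra_simps)
  qed
  finally show ?thesis .
qed



lemma geom_id: "(1 - (x::real)) * (\<Sum>l<m. x ^ l) = 1 - x ^ m"
  by (simp add: one_diff_power_eq)

lemma two_sum_le: "2 * (\<Sum>l<m. real l) \<le> (real m)\<^sup>2"
  by (induction m) (simp_all add: power2_eq_square algebra_simps)

lemma rec_arith:
  fixes e v a :: "nat \<Rightarrow> real" and lam c1 \<alpha> :: real
  assumes lam0: "0 \<le> lam" and lam1: "lam \<le> 1" and c10: "c1 \<ge> 0" and a0: "\<And>l. a l \<ge> 0"
    and erec: "\<And>l. l < m \<Longrightarrow> e (Suc l) \<le> lam * e l + c1 * a l"
    and vbd: "\<And>l. l < m \<Longrightarrow> v l \<le> e l + 2 * \<alpha>\<^sup>2 * real l * (\<Sum>k<l. a k)"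
  shows "e m \<le> lam ^ m * e 0 + c1 * (\<Sum>k<m. a k)"
    and "(\<Sum>l<m. v l) \<le> (\<Sum>l<m. lam ^ l) * e 0 + (c1 * real m + \<alpha>\<^sup>2 * (real m)\<^sup>2) * (\<Sum>k<m. a k)"
proof -
  have gen: "l \<le> m \<Longrightarrow> e l \<le> lam ^ l * e 0 + c1 * (\<Sum>k<l. a k)" for l
  proof (induction l)
    case 0 thus ?case by simp
  next
    case (Suc l)
    hence IH: "e l \<le> lam ^ l * e 0 + c1 * (\<Sum>k<l. a k)" and lm: "l < m" by simp_all
    have S0: "c1 * (\<Sum>k<l. a k) \<ge> 0" using c10 a0 by (simp add: sum_nonneg)
    have "e (Suc l) \<le> lam * e l + c1 * a l" using erec[OF lm] .
    also have "\<dots> \<le> lam * (lam ^ l * e 0 + c1 * (\<Sum>k<l. a k)) + c1 * a l"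
      using mult_left_mono[OF IH lam0] by simp
    also have "\<dots> = lam ^ Suc l * e 0 + lam * (c1 * (\<Sum>k<l. a k)) + c1 * a l" by (simp add: algebra_simps)
    also have "lam * (c1 * (\<Sum>k<l. a k)) \<le> c1 * (\<Sum>k<l. a k)"
      using mult_right_mono[OF lam1 S0] by simp
    finally show ?case by (simp add: algebra_simps)
  qed
  show "e m \<le> lam ^ m * e 0 + c1 * (\<Sum>k<m. a k)" using gen by simp
  define P where "P = (\<Sum>k<m. a k)"
  have P0: "P \<ge> 0" unfolding P_def using a0 by (simp add: sum_nonneg)
  have mono: "l \<le> m \<Longrightarrow> (\<Sum>k<l. a k) \<le> P" for l
    unfolding P_def by (rule sum_mono2) (auto simp: a0)
  have vl: "v l \<le> lam ^ l * e 0 + c1 * P + 2 * \<alpha>\<^sup>2 * P * real l" if l: "l < m" for l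
  proof -
    have "v l \<le> lam ^ l * e 0 + c1 * (\<Sum>k<l. a k) + 2 * \<alpha>\<^sup>2 * real l * (\<Sum>k<l. a k)"
      using vbd[OF l] gen[of l] l by simp
    also have "c1 * (\<Sum>k<l. a k) \<le> c1 * P" using mono[of l] l c10 by (simp add: mult_left_mono)
    also have "2 * \<alpha>\<^sup>2 * real l * (\<Sum>k<l. a k) \<le> 2 * \<alpha>\<^sup>2 * real l * P"
      using mono[of l] l by (simp add: mult_left_mono)
    finally show ?thesis by (simp add: algebra_simps)
  qed
  have "(\<Sum>l<m. v l) \<le> (\<Sum>l<m. lam ^ l * e 0 + c1 * P + 2 * \<alpha>\<^sup>2 * P * real l)"
    by (rule sum_mono) (simp add: vl)
  also have "\<dots> = (\<Sum>l<m. lam ^ l) * e 0 + c1 * real m * P + \<alpha>\<^sup>2 * P * (2 * (\<Sum>l<m. real l))"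
    by (simp add: sum.distrib sum_distrib_left sum_distrib_right algebra_simps)
  also have "\<alpha>\<^sup>2 * P * (2 * (\<Sum>l<m. real l)) \<le> \<alpha>\<^sup>2 * P * (real m)\<^sup>2"
    by (rule mult_left_mono[OF two_sum_le]) (use P0 in simp)
  finally show "(\<Sum>l<m. v l) \<le> (\<Sum>l<m. lam ^ l) * e 0 + (c1 * real m + \<alpha>\<^sup>2 * (real m)\<^sup>2) * (\<Sum>k<m. a k)"
    unfolding P_def by (simp add: algebra_simps)
qed



lemma W_colsum: assumes "gossip_ok W" shows "(\<Sum>i\<in>UNIV. W$i$j) = 1"
proof -
  have sym: "W$i$j = W$j$i" for i j using assms unfolding gossip_ok_def by blast
  have "(\<Sum>i\<in>UNIV. W$i$j) = (\<Sum>i\<in>UNIV. W$j$i)" by (simp add: sym)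
  also have "\<dots> = 1" using assms unfolding gossip_ok_def by blast
  finally show ?thesis .
qed

lemma W_rowsum: "gossip_ok W \<Longrightarrow> (\<Sum>j\<in>UNIV. W$i$j) = 1"
  unfolding gossip_ok_def by blast

lemma avg_step_z:
  fixes x :: "'n::finite \<Rightarrow> 'v::real_normed_vector" and W :: "real^'n^'n"
  assumes W: "gossip_ok W"
  shows "avg_pt (drr_step W g \<alpha> s x) = (1 / real CARD('n)) *\<^sub>R (\<Sum>j\<in>UNIV. x j - \<alpha> *\<^sub>R g j (s j) (x j))"
    (is "_ = _ *\<^sub>R (\<Sum>j\<in>UNIV. ?z j)")
proof -
  have "(\<Sum>i\<in>UNIV. drr_step W g \<alpha> s x i) = (\<Sum>i\<in>UNIV. \<Sum>j\<in>UNIV. W$i$j *\<^sub>R ?z j)"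
    by (simp add: drr_step_def)
  also have "\<dots> = (\<Sum>j\<in>UNIV. \<Sum>i\<in>UNIV. W$i$j *\<^sub>R ?z j)" by (rule sum.swap)
  also have "\<dots> = (\<Sum>j\<in>UNIV. (\<Sum>i\<in>UNIV. W$i$j) *\<^sub>R ?z j)" by (simp add: scaleR_sum_left)
  also have "\<dots> = (\<Sum>j\<in>UNIV. ?z j)" using W_colsum[OF W] by simp
  finally show ?thesis unfolding avg_pt_def by simp
qed

lemma avg_step:
  fixes x :: "'n::finite \<Rightarrow> 'v::real_normed_vector"
  assumes W: "gossip_ok W"
  shows "avg_pt (drr_step W g \<alpha> s x) = avg_pt x - (\<alpha> / real CARD('n)) *\<^sub>R (\<Sum>j\<in>UNIV. g j (s j) (x j))"
proof -
  have e: "(\<Sum>j\<in>UNIV. x j - \<alpha> *\<^sub>R g j (s j) (x j)) = (\<Sum>j\<in>UNIV. x j) - \<alpha> *\<^sub>R (\<Sum>j\<in>UNIV. g j (s j) (x j))"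
    by (simp add: sum_subtractf scaleR_sum_right)
  show ?thesis unfolding avg_step_z[OF W] e by (simp add: avg_pt_def scaleR_diff_right)
qed

lemma cons_step:
  fixes x :: "'n::finite \<Rightarrow> 'v::euclidean_space"
  assumes W: "gossip_ok W"
  shows "consensus_err (drr_step W g \<alpha> s x)
     \<le> (rho_w W)\<^sup>2 * (\<Sum>j\<in>UNIV. (norm ((x j - avg_pt x) - \<alpha> *\<^sub>R g j (s j) (x j)))\<^sup>2)"
proof -
  define n where "n = real CARD('n)"
  have n0: "n > 0" unfolding n_def by simp
  define M :: "real^'n^'n" where "M = W - (\<chi> i j. 1 / n)"
  have Mij: "M$i$j = W$i$j - 1/n" for i j unfolding M_def by simp
  define z where "z j = x j - \<alpha> *\<^sub>R g j (s j) (x j)" for j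
  define y where "y j = (x j - avg_pt x) - \<alpha> *\<^sub>R g j (s j) (x j)" for j
  have yz: "y j = z j - avg_pt x" for j unfolding y_def z_def by (simp add: algebra_simps)
  have avgn: "avg_pt (drr_step W g \<alpha> s x) = (1 / n) *\<^sub>R (\<Sum>j\<in>UNIV. z j)"
    unfolding avg_step_z[OF W] n_def z_def ..
  have key: "drr_step W g \<alpha> s x i - avg_pt (drr_step W g \<alpha> s x) = (\<Sum>j\<in>UNIV. M$i$j *\<^sub>R y j)" for i
  proof -
    have s1: "(\<Sum>j\<in>UNIV. M$i$j) = 0"
      unfolding Mij sum_subtractf W_rowsum[OF W] using n0 by (simp add: n_def)
    have "(\<Sum>j\<in>UNIV. M$i$j *\<^sub>R y j) = (\<Sum>j\<in>UNIV. M$i$j *\<^sub>R z j) - (\<Sum>j\<in>UNIV. M$i$j) *\<^sub>R avg_pt x"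
      unfolding yz scaleR_diff_right sum_subtractf scaleR_sum_left ..
    also have "\<dots> = (\<Sum>j\<in>UNIV. M$i$j *\<^sub>R z j)" using s1 by simp
    also have "\<dots> = (\<Sum>j\<in>UNIV. W$i$j *\<^sub>R z j) - (1/n) *\<^sub>R (\<Sum>j\<in>UNIV. z j)"
      unfolding Mij scaleR_diff_left sum_subtractf scaleR_sum_right by simp
    finally show ?thesis unfolding avgn by (simp add: drr_step_def z_def)
  qed
  have "consensus_err (drr_step W g \<alpha> s x) = (\<Sum>i\<in>UNIV. (norm (\<Sum>j\<in>UNIV. M$i$j *\<^sub>R y j))\<^sup>2)"
    unfolding consensus_err_def key ..
  also have "\<dots> \<le> (onorm (\<lambda>v. M *v v))\<^sup>2 * (\<Sum>j\<in>UNIV. (norm (y j))\<^sup>2)" by (rule gossip_contract)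
  finally show ?thesis unfolding rho_w_def M_def n_def y_def .
qed



lemma sum_sq_le:
  fixes z :: "'i \<Rightarrow> 'v::real_normed_vector"
  assumes "finite I"
  shows "(norm (\<Sum>i\<in>I. z i))\<^sup>2 \<le> real (card I) * (\<Sum>i\<in>I. (norm (z i))\<^sup>2)"
proof -
  have "(norm (\<Sum>i\<in>I. z i))\<^sup>2 \<le> (\<Sum>i\<in>I. norm (z i))\<^sup>2"
    by (rule power_mono[OF norm_sum]) simp
  also have "\<dots> \<le> (\<Sum>i\<in>I. (norm (z i))\<^sup>2) * real (card I)" by (rule sum_squared_le_sum_of_squares)
  finally show ?thesis by (simp add: mult.commute)
qed

lemma sq_add_le: "(norm (a + b :: 'v::real_normed_vector))\<^sup>2 \<le> 2 * (norm a)\<^sup>2 + 2 * (norm b)\<^sup>2"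
proof -
  have "(norm (a + b))\<^sup>2 \<le> (norm a + norm b)\<^sup>2" by (rule power_mono[OF norm_triangle_ineq]) simp
  also have "\<dots> \<le> 2 * (norm a)\<^sup>2 + 2 * (norm b)\<^sup>2"
    using sum_squares_bound[of "norm a" "norm b"] by (simp add: power2_eq_square algebra_simps)
  finally show ?thesis .
qed

lemma rho_split:
  fixes a b :: "'v::real_normed_vector" and r :: real
  assumes r0: "0 \<le> r" and r1: "r < 1"
  shows "r * (norm (a - b))\<^sup>2 \<le> (1 + r) / 2 * (norm a)\<^sup>2 + 2 / (1 - r) * (norm b)\<^sup>2"
proof -
  define x where "x = norm a"
  define y where "y = norm b"
  have "(norm (a - b))\<^sup>2 \<le> (x + y)\<^sup>2" unfolding x_def y_def
    by (rule power_mono[OF norm_triangle_ineq4]) simp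
  hence "r * (norm (a - b))\<^sup>2 \<le> r * (x + y)\<^sup>2" using r0 by (rule mult_left_mono)
  also have "r * (x + y)\<^sup>2 \<le> (1 + r) / 2 * x\<^sup>2 + 2 / (1 - r) * y\<^sup>2"
  proof -
    have id: "(1 - r\<^sup>2) * x\<^sup>2 + 4 * y\<^sup>2 - 2 * r * (1 - r) * (x + y)\<^sup>2
        = ((1 - r) * x - 2 * r * y)\<^sup>2 + 2 * (1 - r) * (2 + r) * y\<^sup>2"
      by (simp add: power2_eq_square algebra_simps)
    have "0 \<le> ((1 - r) * x - 2 * r * y)\<^sup>2 + 2 * (1 - r) * (2 + r) * y\<^sup>2"
      using r0 r1 by simp
    hence h: "2 * r * (1 - r) * (x + y)\<^sup>2 \<le> (1 - r\<^sup>2) * x\<^sup>2 + 4 * y\<^sup>2" using id by linarith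
    have "r * (x + y)\<^sup>2 = (2 * r * (1 - r) * (x + y)\<^sup>2) / (2 * (1 - r))" using r1 by (simp add: field_simps)
    also have "\<dots> \<le> ((1 - r\<^sup>2) * x\<^sup>2 + 4 * y\<^sup>2) / (2 * (1 - r))"
      by (rule divide_right_mono[OF h]) (use r1 in simp)
    also have "\<dots> = (1 + r) / 2 * x\<^sup>2 + 2 / (1 - r) * y\<^sup>2"
      using r1 by (simp add: field_simps power2_eq_square)
    finally show ?thesis .
  qed
  finally show ?thesis unfolding x_def y_def .
qed

lemma pyth:
  fixes x :: "'n::finite \<Rightarrow> 'v::real_inner"
  shows "(\<Sum>j\<in>UNIV. (norm (x j - c))\<^sup>2) = consensus_err x + real CARD('n) * (norm (avg_pt x - c))\<^sup>2"
proof -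
  define xb where "xb = avg_pt x"
  have s0: "(\<Sum>j\<in>UNIV. x j - xb) = 0"
  proof -
    have "(\<Sum>j::'n\<in>UNIV. xb) = real CARD('n) *\<^sub>R xb" by (rule sum_constant_scaleR)
    also have "\<dots> = (\<Sum>j\<in>UNIV. x j)" unfolding xb_def avg_pt_def by simp
    finally show ?thesis by (simp add: sum_subtractf)
  qed
  have "(\<Sum>j\<in>UNIV. (norm (x j - c))\<^sup>2)
      = (\<Sum>j\<in>UNIV. (norm (x j - xb))\<^sup>2 + 2 * ((x j - xb) \<bullet> (xb - c)) + (norm (xb - c))\<^sup>2)"
  proof (rule sum.cong[OF refl])
    fix j
    have "x j - c = (x j - xb) + (xb - c)" by simp
    hence "(norm (x j - c))\<^sup>2 = (norm ((x j - xb) + (xb - c)))\<^sup>2" by metis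
    also have "\<dots> = (norm (x j - xb))\<^sup>2 + 2 * ((x j - xb) \<bullet> (xb - c)) + (norm (xb - c))\<^sup>2"
      unfolding power2_norm_eq_inner inner_add_left inner_add_right
      by (simp only: inner_commute[of "xb - c" "x j - xb"])
    finally show "(norm (x j - c))\<^sup>2 = (norm (x j - xb))\<^sup>2 + 2 * ((x j - xb) \<bullet> (xb - c)) + (norm (xb - c))\<^sup>2" .
  qed
  also have "\<dots> = (\<Sum>j\<in>UNIV. (norm (x j - xb))\<^sup>2) + 2 * ((\<Sum>j\<in>UNIV. x j - xb) \<bullet> (xb - c))
      + real CARD('n) * (norm (xb - c))\<^sup>2"
    by (simp add: sum.distrib inner_sum_left sum_distrib_left)
  also have "\<dots> = consensus_err x + real CARD('n) * (norm (xb - c))\<^sup>2"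
    by (simp add: s0) (simp add: consensus_err_def xb_def)
  finally show ?thesis unfolding xb_def .
qed



lemma le_div_L:
  fixes L a x k D :: real
  assumes "L > 0" "a \<le> x / (k * L * D)"
  shows "a * L \<le> x / (k * D)"
proof -
  have "a * L \<le> x / (k * L * D) * L" using mult_right_mono[OF assms(2), of L] assms(1) by simp
  also have "x / (k * L * D) * L = x / (k * D)" using assms(1) by simp
  finally show ?thesis .
qed

lemma epoch:
  fixes W :: "real^'n^'n"
    and f :: "'n \<Rightarrow> nat \<Rightarrow> 'v::euclidean_space \<Rightarrow> real"
    and g :: "'n \<Rightarrow> nat \<Rightarrow> 'v \<Rightarrow> 'v"
    and fb :: "'n \<Rightarrow> nat \<Rightarrow> real"
    and m :: nat and L \<alpha> :: real
    and p :: "'n \<Rightarrow> nat \<Rightarrow> nat"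
    and X :: "'n \<Rightarrow> 'v"
  assumes m_pos: "m \<ge> 1"
    and W: "gossip_ok W"
    and grad: "\<And>i l x. l < m \<Longrightarrow> (f i l has_derivative (\<lambda>h. g i l x \<bullet> h)) (at x)"
    and lip: "\<And>i l x y. l < m \<Longrightarrow> norm (g i l x - g i l y) \<le> L * norm (x - y)"
    and lower: "\<And>i l x. l < m \<Longrightarrow> f i l x \<ge> fb i l"
    and perms: "\<And>i. bij_betw (p i) {..<m} {..<m}"
    and alpha_pos: "0 < \<alpha>"
    and alpha_le: "\<alpha> \<le> min ((1 - (rho_w W)\<^sup>2) / (4 * sqrt 3 * L * (real m + 2)))
                            ((1 - (rho_w W)\<^sup>2) powr (3/2) / (16 * sqrt 6 * L))"
  shows "let n = real CARD('n); \<rho> = rho_w W;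
         fbar = (INF x. global_f m f x);
         A = 2 * L;
         B2 = 2 * L * (fbar - (1 / (real m * n)) * (\<Sum>i\<in>UNIV. \<Sum>l<m. fb i l));
         Y = drr_inner W g \<alpha> p m X;
         Q = (\<lambda>Z. global_f m f (avg_pt Z) - fbar
                  + 16 * \<alpha> * L\<^sup>2 / (n * (1 - \<rho>\<^sup>2)\<^sup>2) * consensus_err Z)
     in Q Y \<le> (1 + 12 * (real m)\<^sup>2 * \<alpha>^3 * L\<^sup>2 * A * (4 + real m) / (1 - \<rho>\<^sup>2)
                      + 384 * A * \<alpha>^3 * L\<^sup>2 * real m / (1 - \<rho>\<^sup>2)^3) * Q X
                 - real m * \<alpha> / 4 * (norm (global_grad m g (avg_pt X)))\<^sup>2
                 + 6 * real m * \<alpha>^3 * L\<^sup>2 * B2 * (real m * (real m + 4) + 32) / (1 - \<rho>\<^sup>2)^3"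
proof -
  define n where "n = real CARD('n)"
  define \<rho> where "\<rho> = rho_w W"
  define q where "q = 1 - \<rho>\<^sup>2"
  define fbar where "fbar = (INF x. global_f m f x)"
  define A where "A = 2 * L"
  define B2 where "B2 = 2 * L * (fbar - (1 / (real m * n)) * (\<Sum>i\<in>UNIV. \<Sum>l<m. fb i l))"
  define c where "c = 16 * \<alpha> * L\<^sup>2 / (n * q\<^sup>2)"
  have m0: "0 < m" using m_pos by simp
  have n1: "n \<ge> 1" unfolding n_def by (simp add: Suc_le_eq)
  have rho0: "\<rho> \<ge> 0" unfolding \<rho>_def rho_w_def by (rule onorm_pos_le) simp
  obtain b :: 'v where b: "b \<in> Basis" using nonempty_Basis by blast
  have L0': "L \<ge> 0"
  proof -
    have "norm (g undefined 0 b - g undefined 0 0) \<le> L * norm (b - 0)" by (rule lip) (use m0 in simp)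
    hence "0 \<le> L * norm b" by (metis norm_ge_zero order.trans diff_zero)
    thus ?thesis using b by (simp add: zero_le_mult_iff)
  qed
  have L0: "L > 0"
  proof (rule ccontr)
    assume "\<not> L > 0" hence "L = 0" using L0' by simp
    thus False using alpha_le alpha_pos by simp
  qed
  have q0: "q > 0"
  proof (rule ccontr)
    assume "\<not> q > 0"
    hence "q / (4 * sqrt 3 * L * (real m + 2)) \<le> 0" using L0 by (simp add: divide_nonpos_pos)
    thus False using alpha_le alpha_pos unfolding q_def \<rho>_def by simp
  qed
  have q1: "q \<le> 1" unfolding q_def by simp
  have rho1: "\<rho>\<^sup>2 < 1" using q0 unfolding q_def \<rho>_def by simp
  have a2a: "\<alpha>\<^sup>2 * L\<^sup>2 \<le> q\<^sup>2 / (48 * (real m + 2)\<^sup>2)"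
  proof -
    have "\<alpha> \<le> q / (4 * sqrt 3 * L * (real m + 2))" using alpha_le unfolding q_def \<rho>_def by simp
    hence "\<alpha> * L \<le> q / (4 * sqrt 3 * (real m + 2))" using le_div_L[OF L0, of \<alpha> q "4 * sqrt 3" "real m + 2"] by simp
    hence "(\<alpha> * L)\<^sup>2 \<le> (q / (4 * sqrt 3 * (real m + 2)))\<^sup>2"
      by (rule power_mono) (use alpha_pos L0 in simp)
    thus ?thesis by (simp add: power_mult_distrib power_divide)
  qed
  have a2b: "\<alpha>\<^sup>2 * L\<^sup>2 \<le> q^3 / 1536"
  proof -
    have "\<alpha> \<le> q powr (3/2) / (16 * sqrt 6 * L)" using alpha_le unfolding q_def \<rho>_def by simp
    hence "\<alpha> * L \<le> q powr (3/2) / (16 * sqrt 6 * 1)" using L0 le_div_L[of L \<alpha> "q powr (3/2)" "16 * sqrt 6" 1] by simp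
    hence "\<alpha> * L \<le> q powr (3/2) / (16 * sqrt 6)" by simp
    hence "(\<alpha> * L)\<^sup>2 \<le> (q powr (3/2) / (16 * sqrt 6))\<^sup>2"
      by (rule power_mono) (use alpha_pos L0 in simp)
    also have "(q powr (3/2) / (16 * sqrt 6))\<^sup>2 = q^3 / 1536"
    proof -
      have e1: "(q powr (3/2) / (16 * sqrt 6))\<^sup>2 = (q powr (3/2))\<^sup>2 / 1536"
        by (simp add: power_divide power_mult_distrib)
      have "(q powr (3/2))\<^sup>2 = q powr (3/2 + 3/2)" by (simp only: power2_eq_square powr_add)
      also have "\<dots> = q powr (real 3)" by simp
      also have "\<dots> = q^3" using q0 by (rule powr_realpow)
      finally show ?thesis unfolding e1 by simp
    qed
    finally show ?thesis by (simp add: power_mult_distrib)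
  qed
  have Lma: "L * real m * \<alpha> \<le> 1"
  proof -
    have "(L * real m * \<alpha>)\<^sup>2 = (\<alpha>\<^sup>2 * L\<^sup>2) * (real m)\<^sup>2" by (simp add: power_mult_distrib)
    also have "\<dots> \<le> q\<^sup>2 / (48 * (real m + 2)\<^sup>2) * (real m)\<^sup>2" by (rule mult_right_mono[OF a2a]) simp
    also have "\<dots> \<le> 1"
    proof -
      have "q\<^sup>2 \<le> 1" using q0 q1 by (simp add: power_le_one)
      moreover have "(real m)\<^sup>2 \<le> (real m + 2)\<^sup>2" by (rule power_mono) simp_all
      ultimately have "q\<^sup>2 * (real m)\<^sup>2 \<le> 1 * (real m + 2)\<^sup>2"
        by (intro mult_mono) simp_all
      hence "q\<^sup>2 * (real m)\<^sup>2 \<le> 48 * (real m + 2)\<^sup>2"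
        using zero_le_power2[of "real m + 2"] by linarith
      thus ?thesis by (simp add: divide_simps)
    qed
    finally have "(L * real m * \<alpha>)\<^sup>2 \<le> 1\<^sup>2" by simp
    thus ?thesis by (rule power2_le_imp_le) simp
  qed

  have rho1': "\<rho>\<^sup>2 < 1" using q0 unfolding q_def by simp
  define y where "y l = drr_inner W g \<alpha> p l X" for l
  define xb where "xb l = avg_pt (y l)" for l
  define x0 where "x0 = xb 0"
  define G where "G l j = g j (p j l) (y l j)" for l j
  define e where "e l = consensus_err (y l)" for l
  define v where "v l = (\<Sum>j\<in>UNIV. (norm (y l j - x0))\<^sup>2)" for l
  define s where "s l = (\<Sum>j\<in>UNIV. (norm (g j (p j l) x0))\<^sup>2)" for l
  define a where "a l = L\<^sup>2 * v l + s l" for l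
  define Gn where "Gn l = (\<Sum>j\<in>UNIV. (norm (G l j))\<^sup>2)" for l
  define lam where "lam = (1 + \<rho>\<^sup>2) / 2"
  define c1 where "c1 = 4 * \<alpha>\<^sup>2 / q"
  have pl: "l < m \<Longrightarrow> p j l < m" for j l using bij_betw_apply[OF perms[of j], of l] by simp
  have ySuc: "y (Suc l) = drr_step W g \<alpha> (\<lambda>j. p j l) (y l)" for l by (simp add: y_def)
  have xbSuc: "xb (Suc l) = xb l - (\<alpha> / n) *\<^sub>R (\<Sum>j\<in>UNIV. G l j)" for l
    unfolding xb_def ySuc avg_step[OF W] G_def n_def ..
  have xbsum: "xb l = x0 - (\<alpha> / n) *\<^sub>R (\<Sum>k<l. \<Sum>j\<in>UNIV. G k j)" for l
  proof (induction l)
    case 0 show ?case by (simp add: x0_def)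
  next
    case (Suc l) show ?case unfolding xbSuc Suc by (simp add: scaleR_add_right algebra_simps)
  qed
  have a_nn: "a l \<ge> 0" for l unfolding a_def v_def s_def by (simp add: sum_nonneg)
  have Gnb: "Gn l \<le> 2 * a l" if l: "l < m" for l
  proof -
    have "(norm (G l j))\<^sup>2 \<le> 2 * (L\<^sup>2 * (norm (y l j - x0))\<^sup>2) + 2 * (norm (g j (p j l) x0))\<^sup>2" for j
    proof -
      have "(norm (G l j))\<^sup>2 = (norm ((G l j - g j (p j l) x0) + g j (p j l) x0))\<^sup>2" by simp
      also have "\<dots> \<le> 2 * (norm (G l j - g j (p j l) x0))\<^sup>2 + 2 * (norm (g j (p j l) x0))\<^sup>2"
        by (rule sq_add_le)
      also have "(norm (G l j - g j (p j l) x0))\<^sup>2 \<le> (L * norm (y l j - x0))\<^sup>2"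
        unfolding G_def by (rule power_mono[OF lip[OF pl[OF l]]]) simp
      finally show ?thesis by (simp add: power_mult_distrib)
    qed
    hence "Gn l \<le> (\<Sum>j\<in>UNIV. 2 * (L\<^sup>2 * (norm (y l j - x0))\<^sup>2) + 2 * (norm (g j (p j l) x0))\<^sup>2)"
      unfolding Gn_def by (rule sum_mono)
    also have "\<dots> = 2 * a l" unfolding a_def v_def s_def
      by (simp add: sum.distrib sum_distrib_left)
    finally show ?thesis .
  qed
  have econs: "e (Suc l) \<le> lam * e l + c1 * a l" if l: "l < m" for l
  proof -
    have "e (Suc l) \<le> \<rho>\<^sup>2 * (\<Sum>j\<in>UNIV. (norm ((y l j - xb l) - \<alpha> *\<^sub>R G l j))\<^sup>2)"
      unfolding e_def ySuc \<rho>_def xb_def G_def by (rule cons_step[OF W])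
    also have "\<dots> = (\<Sum>j\<in>UNIV. \<rho>\<^sup>2 * (norm ((y l j - xb l) - \<alpha> *\<^sub>R G l j))\<^sup>2)"
      by (simp add: sum_distrib_left)
    also have "\<dots> \<le> (\<Sum>j\<in>UNIV. lam * (norm (y l j - xb l))\<^sup>2 + 2 / q * (\<alpha>\<^sup>2 * (norm (G l j))\<^sup>2))"
    proof (rule sum_mono)
      fix j
      have "\<rho>\<^sup>2 * (norm ((y l j - xb l) - \<alpha> *\<^sub>R G l j))\<^sup>2
          \<le> (1 + \<rho>\<^sup>2) / 2 * (norm (y l j - xb l))\<^sup>2 + 2 / (1 - \<rho>\<^sup>2) * (norm (\<alpha> *\<^sub>R G l j))\<^sup>2"
        by (rule rho_split) (use rho1' in simp_all)
      thus "\<rho>\<^sup>2 * (norm ((y l j - xb l) - \<alpha> *\<^sub>R G l j))\<^sup>2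
          \<le> lam * (norm (y l j - xb l))\<^sup>2 + 2 / q * (\<alpha>\<^sup>2 * (norm (G l j))\<^sup>2)"
        unfolding lam_def q_def by (simp add: power_mult_distrib)
    qed
    also have "\<dots> = lam * e l + 2 / q * \<alpha>\<^sup>2 * Gn l"
      unfolding e_def consensus_err_def Gn_def xb_def by (simp add: sum.distrib sum_distrib_left mult.assoc)
    also have "2 / q * \<alpha>\<^sup>2 * Gn l \<le> 2 / q * \<alpha>\<^sup>2 * (2 * a l)"
      by (rule mult_left_mono[OF Gnb[OF l]]) (use q0 in simp)
    finally show ?thesis unfolding c1_def by (simp add: field_simps)
  qed

  have n0: "n > 0" using n1 by simp
  have vb: "v l \<le> e l + 2 * \<alpha>\<^sup>2 * real l * (\<Sum>k<l. a k)" if l: "l < m" for l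
  proof -
    define S where "S = (\<Sum>k<l. \<Sum>j\<in>UNIV. G k j)"
    have "(norm S)\<^sup>2 \<le> real l * (\<Sum>k<l. (norm (\<Sum>j\<in>UNIV. G k j))\<^sup>2)"
      unfolding S_def using sum_sq_le[of "{..<l}" "\<lambda>k. \<Sum>j\<in>UNIV. G k j"] by simp
    also have "(\<Sum>k<l. (norm (\<Sum>j\<in>UNIV. G k j))\<^sup>2) \<le> (\<Sum>k<l. n * (2 * a k))"
    proof (rule sum_mono)
      fix k assume k: "k \<in> {..<l}"
      have "(norm (\<Sum>j\<in>UNIV. G k j))\<^sup>2 \<le> n * Gn k"
        unfolding n_def Gn_def using sum_sq_le[of UNIV "G k"] by simp
      also have "\<dots> \<le> n * (2 * a k)" by (rule mult_left_mono[OF Gnb]) (use l k n0 in auto)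
      finally show "(norm (\<Sum>j\<in>UNIV. G k j))\<^sup>2 \<le> n * (2 * a k)" .
    qed
    finally have NS: "(norm S)\<^sup>2 \<le> real l * (\<Sum>k<l. n * (2 * a k))" by (simp add: mult_left_mono)
    have "v l = e l + n * (norm (xb l - x0))\<^sup>2" unfolding v_def e_def xb_def n_def by (rule pyth)
    also have "norm (xb l - x0) = \<alpha> / n * norm S"
      unfolding xbsum S_def using alpha_pos n0 by simp
    also have "n * (\<alpha> / n * norm S)\<^sup>2 = \<alpha>\<^sup>2 / n * (norm S)\<^sup>2"
      using n0 by (simp add: power2_eq_square field_simps)
    finally have "v l \<le> e l + \<alpha>\<^sup>2 / n * (real l * (\<Sum>k<l. n * (2 * a k)))"
      using mult_left_mono[OF NS, of "\<alpha>\<^sup>2 / n"] n0 by simp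
    also have "\<alpha>\<^sup>2 / n * (real l * (\<Sum>k<l. n * (2 * a k))) = 2 * \<alpha>\<^sup>2 * real l * (\<Sum>k<l. a k)"
      using n0 by (simp add: sum_distrib_left[symmetric] sum_distrib_right[symmetric] field_simps)
    finally show ?thesis .
  qed
  have lam0: "0 \<le> lam" unfolding lam_def by simp
  have lam1: "lam \<le> 1" unfolding lam_def using rho1' by simp
  have c10: "c1 \<ge> 0" unfolding c1_def using q0 by simp
  note RA = rec_arith[of lam c1 a m e v \<alpha>, OF lam0 lam1 c10 a_nn econs vb]

  define V where "V = (\<Sum>l<m. v l)"
  define nabla where "nabla = global_grad m g x0"
  have m0': "real m > 0" using m0 by simp
  have gd: "(global_f m f has_derivative (\<lambda>d. global_grad m g x \<bullet> d)) (at x)" for x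
    by (rule global_f_deriv) (rule grad)
  have gl: "norm (global_grad m g x - global_grad m g z) \<le> L * norm (x - z)" for x z
    by (rule global_grad_lip[OF m_pos lip])
  have sg: "(\<Sum>k<m. \<Sum>j\<in>UNIV. g j (p j k) x0) = (n * real m) *\<^sub>R nabla"
  proof -
    have "(\<Sum>k<m. \<Sum>j\<in>UNIV. g j (p j k) x0) = (\<Sum>j\<in>UNIV. \<Sum>k<m. g j (p j k) x0)" by (rule sum.swap)
    also have "\<dots> = (\<Sum>j\<in>UNIV. \<Sum>k<m. g j k x0)"
      by (rule sum.cong[OF refl], rule sum.reindex_bij_betw[OF perms])
    also have "\<dots> = (n * real m) *\<^sub>R nabla"
      unfolding nabla_def global_grad_def n_def using m0' by (simp add: scaleR_sum_right)
    finally show ?thesis .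
  qed
  define D where "D = (\<Sum>k<m. \<Sum>j\<in>UNIV. G k j - g j (p j k) x0)"
  define r where "r = (1 / (n * real m)) *\<^sub>R D"
  have SG: "(\<Sum>k<m. \<Sum>j\<in>UNIV. G k j) = D + (n * real m) *\<^sub>R nabla"
    unfolding D_def sg[symmetric] by (simp add: sum_subtractf)
  have step: "xb m - x0 = - (real m * \<alpha>) *\<^sub>R (nabla + r)"
    unfolding xbsum SG r_def using n0 m0' by (simp add: scaleR_add_right algebra_simps)
  have rb: "(norm r)\<^sup>2 \<le> L\<^sup>2 / (n * real m) * V"
  proof -
    have "(norm D)\<^sup>2 \<le> real m * (\<Sum>k<m. (norm (\<Sum>j\<in>UNIV. G k j - g j (p j k) x0))\<^sup>2)"
      unfolding D_def using sum_sq_le[of "{..<m}" "\<lambda>k. \<Sum>j\<in>UNIV. G k j - g j (p j k) x0"] by simp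
    also have "(\<Sum>k<m. (norm (\<Sum>j\<in>UNIV. G k j - g j (p j k) x0))\<^sup>2) \<le> (\<Sum>k<m. n * (L\<^sup>2 * v k))"
    proof (rule sum_mono)
      fix k assume k: "k \<in> {..<m}"
      have "(norm (\<Sum>j\<in>UNIV. G k j - g j (p j k) x0))\<^sup>2 \<le> n * (\<Sum>j\<in>UNIV. (norm (G k j - g j (p j k) x0))\<^sup>2)"
        unfolding n_def using sum_sq_le[of UNIV "\<lambda>j. G k j - g j (p j k) x0"] by simp
      also have "(\<Sum>j\<in>UNIV. (norm (G k j - g j (p j k) x0))\<^sup>2) \<le> (\<Sum>j\<in>UNIV. L\<^sup>2 * (norm (y k j - x0))\<^sup>2)"
      proof (rule sum_mono)
        fix j
        have "(norm (G k j - g j (p j k) x0))\<^sup>2 \<le> (L * norm (y k j - x0))\<^sup>2"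
          unfolding G_def by (rule power_mono[OF lip]) (use k pl in auto)
        thus "(norm (G k j - g j (p j k) x0))\<^sup>2 \<le> L\<^sup>2 * (norm (y k j - x0))\<^sup>2" by (simp add: power_mult_distrib)
      qed
      finally show "(norm (\<Sum>j\<in>UNIV. G k j - g j (p j k) x0))\<^sup>2 \<le> n * (L\<^sup>2 * v k)"
        unfolding v_def using n0 by (simp add: sum_distrib_left mult_left_mono)
    qed
    finally have ND: "(norm D)\<^sup>2 \<le> real m * (n * L\<^sup>2 * V)"
      unfolding V_def by (simp add: mult_left_mono sum_distrib_left mult.assoc)
    have "(norm r)\<^sup>2 = (1 / (n * real m))\<^sup>2 * (norm D)\<^sup>2"
      unfolding r_def using n0 m0' by (simp add: power_mult_distrib power_divide)
    also have "\<dots> \<le> (1 / (n * real m))\<^sup>2 * (real m * (n * L\<^sup>2 * V))"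
      by (rule mult_left_mono[OF ND]) simp
    also have "\<dots> = L\<^sup>2 / (n * real m) * V" using n0 m0' by (simp add: power2_eq_square field_simps)
    finally show ?thesis .
  qed
  have desc: "global_f m f (xb m) \<le> global_f m f x0 + nabla \<bullet> (xb m - x0) + L / 2 * (norm (xb m - x0))\<^sup>2"
    unfolding nabla_def by (rule descent[OF gd gl])
  define t where "t = real m * \<alpha>"
  have t0: "t > 0" unfolding t_def using m0' alpha_pos by simp
  have Lt: "L * t \<le> 1" unfolding t_def using Lma by (simp add: mult.assoc)
  have dstep: "nabla \<bullet> (xb m - x0) + L / 2 * (norm (xb m - x0))\<^sup>2 \<le> - (t / 2) * (norm nabla)\<^sup>2 + t / 2 * (norm r)\<^sup>2"
  proof -
    define N where "N = (norm (nabla + r))\<^sup>2"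
    have N0: "N \<ge> 0" unfolding N_def by simp
    have Nexp: "N = nabla \<bullet> nabla + 2 * (nabla \<bullet> r) + r \<bullet> r"
      unfolding N_def power2_norm_eq_inner by (simp add: inner_add_left inner_add_right inner_commute)
    have "nabla \<bullet> (xb m - x0) + L / 2 * (norm (xb m - x0))\<^sup>2 = - t * (nabla \<bullet> nabla + nabla \<bullet> r) + L / 2 * t\<^sup>2 * N"
      unfolding step t_def[symmetric] N_def by (simp add: inner_add_right power_mult_distrib)
    also have "\<dots> = - (t / 2) * (nabla \<bullet> nabla) + t / 2 * (r \<bullet> r) - t / 2 * N + L / 2 * t\<^sup>2 * N"
      unfolding Nexp by (simp add: algebra_simps)
    also have "L / 2 * t\<^sup>2 * N \<le> t / 2 * N"
    proof -
      have "(L * t) * (t / 2 * N) \<le> 1 * (t / 2 * N)" by (rule mult_right_mono[OF Lt]) (use t0 N0 in simp)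
      thus ?thesis by (simp add: power2_eq_square algebra_simps)
    qed
    finally show ?thesis by (simp add: power2_norm_eq_inner)
  qed

  define SF where "SF = (\<Sum>i\<in>UNIV. \<Sum>l<m. fb i l)"
  have glob_eq: "global_f m f x = (1 / (real m * n)) * (\<Sum>i\<in>UNIV. \<Sum>l<m. f i l x)" for x
    unfolding global_f_def n_def by (simp add: sum_divide_distrib[symmetric])
  have lowF: "(1 / (real m * n)) * SF \<le> global_f m f x" for x
  proof -
    have "SF \<le> (\<Sum>i\<in>UNIV. \<Sum>l<m. f i l x)" unfolding SF_def
      by (intro sum_mono) (simp add: lower)
    thus ?thesis unfolding glob_eq using n0 m0' by (simp add: divide_right_mono)
  qed
  have bdd: "bdd_below (range (global_f m f))" unfolding bdd_below_def using lowF by blast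
  have fbar_le: "fbar \<le> global_f m f x" for x unfolding fbar_def by (rule cINF_lower[OF bdd]) simp
  have fbar_ge: "(1 / (real m * n)) * SF \<le> fbar" unfolding fbar_def by (rule cINF_greatest) (use lowF in auto)
  define \<Delta> where "\<Delta> = global_f m f x0 - fbar"
  have D0: "\<Delta> \<ge> 0" unfolding \<Delta>_def using fbar_le by simp
  have B0: "B2 \<ge> 0" unfolding B2_def SF_def[symmetric] using fbar_ge L0 by simp
  define Ssum where "Ssum = (\<Sum>l<m. s l)"
  have S0: "Ssum \<ge> 0" unfolding Ssum_def s_def by (simp add: sum_nonneg)
  have H5: "Ssum \<le> n * real m * (A * \<Delta> + B2)"
  proof -
    have "Ssum = (\<Sum>j\<in>UNIV. \<Sum>k<m. (norm (g j (p j k) x0))\<^sup>2)" unfolding Ssum_def s_def by (rule sum.swap)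
    also have "\<dots> = (\<Sum>j\<in>UNIV. \<Sum>k<m. (norm (g j k x0))\<^sup>2)"
      by (rule sum.cong[OF refl], rule sum.reindex_bij_betw[OF perms])
    also have "\<dots> \<le> (\<Sum>j\<in>UNIV. \<Sum>k<m. 2 * L * (f j k x0 - fb j k))"
    proof (intro sum_mono)
      fix j k assume k: "k \<in> {..<m}"
      show "(norm (g j k x0))\<^sup>2 \<le> 2 * L * (f j k x0 - fb j k)"
        by (rule grad_sq_bound[OF grad lip L0 lower]) (use k in auto)
    qed
    also have "\<dots> = 2 * L * ((\<Sum>j\<in>UNIV. \<Sum>k<m. f j k x0) - SF)"
      unfolding SF_def by (simp add: sum_subtractf sum_distrib_left right_diff_distrib)
    also have "\<dots> = n * real m * (A * \<Delta> + B2)"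
      unfolding A_def \<Delta>_def B2_def SF_def[symmetric] glob_eq using n0 m0' by (simp add: field_simps)
    finally show ?thesis .
  qed
  have H4: "(\<Sum>k<m. a k) = L\<^sup>2 * V + Ssum"
    unfolding a_def V_def Ssum_def by (simp add: sum.distrib sum_distrib_left)
  define gn where "gn = (norm nabla)\<^sup>2"
  have H1: "global_f m f (xb m) - fbar \<le> \<Delta> - real m * \<alpha> / 2 * gn + \<alpha> * L\<^sup>2 / (2 * n) * V"
  proof -
    have "t / 2 * (norm r)\<^sup>2 \<le> t / 2 * (L\<^sup>2 / (n * real m) * V)"
      by (rule mult_left_mono[OF rb]) (use t0 in simp)
    also have "\<dots> = \<alpha> * L\<^sup>2 / (2 * n) * V" unfolding t_def using m0' n0 by (simp add: field_simps)
    finally have "t / 2 * (norm r)\<^sup>2 \<le> \<alpha> * L\<^sup>2 / (2 * n) * V" .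
    moreover have "real m * \<alpha> / 2 * gn = t / 2 * (norm nabla)\<^sup>2" unfolding t_def gn_def by simp
    ultimately show ?thesis using desc dstep unfolding \<Delta>_def by linarith
  qed
  define \<Lambda> where "\<Lambda> = (\<Sum>l<m. lam ^ l)"
  have Lam0: "\<Lambda> \<ge> 0" unfolding \<Lambda>_def using lam0 by (simp add: sum_nonneg)
  have H6: "lam ^ m = 1 - q / 2 * \<Lambda>"
  proof -
    have "(1 - lam) * \<Lambda> = 1 - lam ^ m" unfolding \<Lambda>_def by (rule geom_id)
    moreover have "1 - lam = q / 2" unfolding lam_def q_def by (simp add: field_simps)
    ultimately show ?thesis by (simp add: field_simps)
  qed
  have e00: "e 0 \<ge> 0" unfolding e_def consensus_err_def by (simp add: sum_nonneg)
  have gn0: "gn \<ge> 0" unfolding gn_def by simp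
  have FA: "global_f m f (xb m) - fbar + c * e m
      \<le> (1 + (12 * (real m)\<^sup>2 * \<alpha>^3 * L\<^sup>2 * A * (4 + real m) / q + 384 * A * \<alpha>^3 * L\<^sup>2 * real m / q^3))
          * (\<Delta> + c * e 0) - real m * \<alpha> / 4 * gn
        + 6 * real m * \<alpha>^3 * L\<^sup>2 * B2 * (real m * (real m + 4) + 32) / q^3"
  proof -
    have m1r: "real m \<ge> 1" using m_pos by simp
    have RA1: "e m \<le> lam ^ m * e 0 + c1 * (\<Sum>k<m. a k)" using RA(1) by simp
    have RA2: "V \<le> \<Lambda> * e 0 + (c1 * real m + \<alpha>\<^sup>2 * (real m)\<^sup>2) * (\<Sum>k<m. a k)"
      using RA(2) unfolding V_def \<Lambda>_def by simp
    show ?thesis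
      by (rule final_arith[OF D0 B0 e00 Lam0 gn0 S0 q0 q1 L0 alpha_pos n1 m1r c1_def c_def A_def refl refl
          a2a a2b H1 RA1 RA2 H4 H5 H6])
  qed
  have x0X: "x0 = avg_pt X" unfolding x0_def xb_def y_def by simp
  have e0X: "e 0 = consensus_err X" unfolding e_def y_def by simp
  show ?thesis
    using FA unfolding Let_def x0X e0X
    unfolding xb_def y_def e_def c_def \<Delta>_def gn_def nabla_def B2_def A_def q_def \<rho>_def n_def fbar_def x0X by (simp only: add.assoc)
qed

theorem lemma15:
  fixes W :: "real^'n^'n"
    and f :: "'n \<Rightarrow> nat \<Rightarrow> 'v::euclidean_space \<Rightarrow> real"
    and g :: "'n \<Rightarrow> nat \<Rightarrow> 'v \<Rightarrow> 'v"
    and fb :: "'n \<Rightarrow> nat \<Rightarrow> real"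
    and m :: nat and L \<alpha> :: real
    and \<pi> :: "nat \<Rightarrow> 'n \<Rightarrow> nat \<Rightarrow> nat"
    and x0 :: "'n \<Rightarrow> 'v" and t :: nat
  assumes m_pos: "m \<ge> 1"
    and W: "gossip_ok W"
    and grad: "\<And>i l x. l < m \<Longrightarrow> (f i l has_derivative (\<lambda>h. g i l x \<bullet> h)) (at x)"
    and lip: "\<And>i l x y. l < m \<Longrightarrow> norm (g i l x - g i l y) \<le> L * norm (x - y)"
    and lower: "\<And>i l x. l < m \<Longrightarrow> f i l x \<ge> fb i l"
    and perms: "\<And>s i. bij_betw (\<pi> s i) {..<m} {..<m}"
    and alpha_pos: "0 < \<alpha>"
    and alpha_le: "\<alpha> \<le> min ((1 - (rho_w W)\<^sup>2) / (4 * sqrt 3 * L * (real m + 2)))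
                            ((1 - (rho_w W)\<^sup>2) powr (3/2) / (16 * sqrt 6 * L))"
  shows
    "let n = real CARD('n); \<rho> = rho_w W;
         fbar = (INF x. global_f m f x);
         A = 2 * L;
         B2 = 2 * L * (fbar - (1 / (real m * n)) * (\<Sum>i\<in>UNIV. \<Sum>l<m. fb i l));
         xs = drr W g (\<lambda>_. \<alpha>) m \<pi> x0;
         Q = (\<lambda>s. global_f m f (avg_pt (xs s)) - fbar
                  + 16 * \<alpha> * L\<^sup>2 / (n * (1 - \<rho>\<^sup>2)\<^sup>2) * consensus_err (xs s))
     in Q (Suc t) \<le> (1 + 12 * (real m)\<^sup>2 * \<alpha>^3 * L\<^sup>2 * A * (4 + real m) / (1 - \<rho>\<^sup>2)
                      + 384 * A * \<alpha>^3 * L\<^sup>2 * real m / (1 - \<rho>\<^sup>2)^3) * Q t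
                 - real m * \<alpha> / 4 * (norm (global_grad m g (avg_pt (xs t))))\<^sup>2
                 + 6 * real m * \<alpha>^3 * L\<^sup>2 * B2 * (real m * (real m + 4) + 32) / (1 - \<rho>\<^sup>2)^3"
proof -
  have eq: "drr W g (\<lambda>_. \<alpha>) m \<pi> x0 (Suc t) = drr_inner W g \<alpha> (\<pi> t) m (drr W g (\<lambda>_. \<alpha>) m \<pi> x0 t)"
    by simp
  show ?thesis
    using epoch[OF m_pos W grad lip lower perms[of t] alpha_pos alpha_le, where X = "drr W g (\<lambda>_. \<alpha>) m \<pi> x0 t"]
    unfolding Let_def eq .
qed

end
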